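(* Let $A\in\mathbb{R}^{n\times n}$ be symmetric, $\beta>0$, $f(\mathbf{z})=\frac12\mathbf{z}^TA\mathbf{z}+\frac{\beta}{2}\sum_kz_k^4$ on $\mathbb{S}^{n-1}$, and let $\mathbf{z}\in\mathbb{S}^{n-1}$ be a stationary point, i.e. $[A+2\beta\,\mathrm{diag}(z_1^2,\dots,z_n^2)]\mathbf{z}=2\lambda\mathbf{z}$ with $2\lambda=\mathbf{z}^TA\mathbf{z}+2\beta\|\mathbf{z}\|_4^4$, such that $H=A+2\beta\,\mathrm{diag}(z_1^2,\dots,z_n^2)-2\lambda I$ is positive semidefinite. Then the KL exponent at $\mathbf{z}$ is at least $\frac14$: there exist $\delta,\eta>0$ such that $|f(\mathbf{y})-f(\mathbf{z})|^{3/4}\le\eta\|\mathrm{grad} f(\mathbf{y})\|$ for all $\mathbf{y}\in\mathbb{S}^{n-1}$ with $\|\mathbf{y}-\mathbf{z}\|<\delta$.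
   Context: $\mathbb{S}^{n-1}$ is the unit sphere in $\mathbb{R}^n$. For $\mathbf{y}\in\mathbb{S}^{n-1}$, $\mathrm{grad} f(\mathbf{y})=(I-\mathbf{y}\mathbf{y}^T)[A\mathbf{y}+2\beta\,\mathrm{diag}(y_1^2,\dots,y_n^2)\mathbf{y}]$ is the Riemannian gradient. *)

theory Defs
  imports "HOL-Analysis.Analysis"
begin

definition unit_sphere :: "(real^'n) set" where
  "unit_sphere = {y. norm y = 1}"

definition diag_sq :: "real^'n \<Rightarrow> real^'n^'n" where
  "diag_sq z = (\<chi> i j. if i = j then (z $ i)^2 else 0)"

definition quartic_obj :: "real^'n^'n \<Rightarrow> real \<Rightarrow> real^'n \<Rightarrow> real" where
  "quartic_obj A \<beta> z = (1/2) * (z \<bullet> (A *v z)) + (\<beta>/2) * (\<Sum>k\<in>UNIV. (z $ k)^4)"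

definition riem_grad :: "real^'n^'n \<Rightarrow> real \<Rightarrow> real^'n \<Rightarrow> real^'n" where
  "riem_grad A \<beta> y =
     (let g = A *v y + (2 * \<beta>) *\<^sub>R (diag_sq y *v y) in g - (y \<bullet> g) *\<^sub>R y)"

definition psd :: "real^'n^'n \<Rightarrow> bool" where
  "psd M \<longleftrightarrow> (\<forall>x. 0 \<le> x \<bullet> (M *v x))"

end

theory Submission
  imports Defs
begin

lemma mv_comp: "((M::real^'n^'m) *v x)$i = (\<Sum>j\<in>UNIV. M$i$j * x$j)"
  by (simp add: matrix_vector_mult_def)

lemma inner_sum: "(x::real^'n) \<bullet> y = (\<Sum>i\<in>UNIV. x$i * y$i)"
  by (simp add: inner_vec_def)

lemma normsq_sum: "norm (x::real^'n) ^ 2 = (\<Sum>i\<in>UNIV. (x$i)^2)"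
  by (simp only: power2_norm_eq_inner) (simp add: inner_vec_def power2_eq_square)

lemma H_comp:
  fixes A :: "real^'n^'n"
  shows "((A + a *\<^sub>R diag_sq z - b *\<^sub>R mat 1) *v x)$i = (A *v x)$i + (a*(z$i)^2 - b) * x$i"
proof -
  have e: "\<And>j. (A + a *\<^sub>R diag_sq z - b *\<^sub>R mat 1)$i$j = A$i$j + (if i = j then a*(z$i)^2 - b else 0)"
    by (simp add: diag_sq_def mat_def)
  have "((A + a *\<^sub>R diag_sq z - b *\<^sub>R mat 1) *v x)$i
      = (\<Sum>j\<in>UNIV. A$i$j * x$j + (if i = j then (a*(z$i)^2 - b) * x$j else 0))"
    unfolding mv_comp e by (intro sum.cong) (auto simp: algebra_simps)
  also have "\<dots> = (A *v x)$i + (a*(z$i)^2 - b) * x$i"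
    by (simp add: mv_comp sum.distrib)
  finally show ?thesis .
qed

lemma sym_mv:
  fixes M :: "real^'n^'n"
  assumes "transpose M = M"
  shows "a \<bullet> (M *v b) = (M *v a) \<bullet> b"
proof -
  have "a \<bullet> (M *v b) = (a v* M) \<bullet> b" by (simp add: dot_lmul_matrix)
  also have "a v* M = transpose M *v a" by simp
  finally show ?thesis using assms by simp
qed

lemma H_sym:
  fixes A :: "real^'n^'n"
  assumes "transpose A = A"
  shows "transpose (A + a *\<^sub>R diag_sq z - b *\<^sub>R mat 1) = A + a *\<^sub>R diag_sq z - b *\<^sub>R mat 1"
proof -
  have "\<And>i j. A$j$i = A$i$j" using assms by (metis transpose_def vec_lambda_beta)
  then show ?thesis
    by (simp add: vec_eq_iff transpose_def diag_sq_def mat_def)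
qed

lemma le_powr_quarter:
  fixes a X :: real
  assumes "0 \<le> a" "a^4 \<le> X"
  shows "a \<le> X powr (1/4)"
proof -
  have "(a^4) powr (1/4) = (a powr 4) powr (1/4)" using assms(1) by simp
  also have "\<dots> = a powr (4 * (1/4))" by (rule powr_powr)
  also have "\<dots> = a" using assms(1) by simp
  finally have e: "(a^4) powr (1/4) = a" .
  have "(a^4) powr (1/4) \<le> X powr (1/4)" using assms by (intro powr_mono2) auto
  then show ?thesis using e by simp
qed

theorem theorem16:
  fixes A :: "real^'n^'n" and \<beta> lam :: real and z :: "real^'n"
  assumes symA: "transpose A = A"
    and beta_pos: "\<beta> > 0"
    and z_sphere: "z \<in> unit_sphere"
    and stat: "(A + (2 * \<beta>) *\<^sub>R diag_sq z) *v z = (2 * lam) *\<^sub>R z"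
    and lam_def: "2 * lam = z \<bullet> (A *v z) + 2 * \<beta> * (\<Sum>k\<in>UNIV. (z $ k)^4)"
    and H_psd: "psd (A + (2 * \<beta>) *\<^sub>R diag_sq z - (2 * lam) *\<^sub>R mat 1)"
  shows "\<exists>\<delta> > 0. \<exists>\<eta> > 0. \<forall>y \<in> unit_sphere. norm (y - z) < \<delta> \<longrightarrow>
           \<bar>quartic_obj A \<beta> y - quartic_obj A \<beta> z\<bar> powr (3/4)
             \<le> \<eta> * norm (riem_grad A \<beta> y)"
proof -
  define H where "H = A + (2*\<beta>) *\<^sub>R diag_sq z - (2*lam) *\<^sub>R mat 1"
  have Hc: "\<And>x i. (H *v x)$i = (A *v x)$i + (2*\<beta>*(z$i)^2 - 2*lam) * x$i"
    unfolding H_def by (rule H_comp)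
  have HT: "transpose H = H" unfolding H_def using symA by (rule H_sym)
  have Hs: "\<And>a b. a \<bullet> (H *v b) = (H *v a) \<bullet> b" using sym_mv[OF HT] .
  have psd: "\<And>x. 0 \<le> x \<bullet> (H *v x)" using H_psd unfolding psd_def H_def by blast
  have Azc: "\<And>i. (A *v z)$i = 2*lam*z$i - 2*\<beta>*(z$i)^3"
  proof -
    fix i
    have "((A + (2*\<beta>) *\<^sub>R diag_sq z - 0 *\<^sub>R mat 1) *v z)$i = (A *v z)$i + (2*\<beta>*(z$i)^2 - 0) * z$i"
      by (rule H_comp)
    then have "2*lam*z$i = (A *v z)$i + 2*\<beta>*(z$i)^2 * z$i" using stat by simp
    then show "(A *v z)$i = 2*lam*z$i - 2*\<beta>*(z$i)^3" by (simp add: power3_eq_cube power2_eq_square)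
  qed
  have Hz: "H *v z = 0"
    by (simp add: vec_eq_iff Hc Azc power3_eq_cube power2_eq_square algebra_simps)
  have zn: "norm z = 1" using z_sphere by (simp add: unit_sphere_def)
  have zz: "(\<Sum>i\<in>UNIV. (z$i)^2) = 1" using normsq_sum[of z] zn by simp
  obtain L where L: "L > 0" "\<And>x. norm (H *v x) \<le> L * norm x"
    using bounded_linear.pos_bounded[OF matrix_vector_mul_bounded_linear[of H]]
    by (metis mult.commute)
  have HQ: "\<And>x. (norm (H *v x))^2 \<le> L * (x \<bullet> (H *v x))"
  proof -
    fix x :: "real^'n"
    define w where "w = H *v x"
    have "0 \<le> (x - (1/L) *\<^sub>R w) \<bullet> (H *v (x - (1/L) *\<^sub>R w))" by (rule psd)
    also have "\<dots> = x \<bullet> (H *v x) - (2/L) * (w \<bullet> w) + (1/L)^2 * (w \<bullet> (H *v w))"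
    proof -
      have "x \<bullet> (H *v w) = w \<bullet> w" using Hs[of x w] unfolding w_def by simp
      then show ?thesis
        by (simp add: matrix_vector_mult_diff_distrib matrix_vector_mult_scaleR inner_diff_left
            inner_diff_right algebra_simps power2_eq_square w_def[symmetric] inner_commute)
    qed
    also have "w \<bullet> (H *v w) \<le> L * (w \<bullet> w)"
    proof -
      have "w \<bullet> (H *v w) \<le> norm w * norm (H *v w)" by (rule norm_cauchy_schwarz)
      also have "\<dots> \<le> norm w * (L * norm w)" using L(2)[of w] by (simp add: mult_left_mono)
      finally show ?thesis by (simp add: power2_norm_eq_inner[symmetric] power2_eq_square algebra_simps)
    qed
    then have "x \<bullet> (H *v x) - (2/L) * (w \<bullet> w) + (1/L)^2 * (w \<bullet> (H *v w))
        \<le> x \<bullet> (H *v x) - (2/L) * (w \<bullet> w) + (1/L)^2 * (L * (w \<bullet> w))"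
      by (simp add: mult_left_mono)
    finally have "0 \<le> x \<bullet> (H *v x) - (1/L) * (w \<bullet> w)" using L(1)
      by (simp add: power2_eq_square field_simps)
    then have "(w \<bullet> w) \<le> L * (x \<bullet> (H *v x))" using L(1) by (simp add: field_simps)
    then show "(norm (H *v x))^2 \<le> L * (x \<bullet> (H *v x))" by (simp add: w_def power2_norm_eq_inner)
  qed
  have zne: "\<exists>i. z$i \<noteq> 0"
  proof (rule ccontr)
    assume "\<not> (\<exists>i. z$i \<noteq> 0)"
    then have "z = 0" by (simp add: vec_eq_iff)
    then show False using zn by simp
  qed
  define m where "m = Min ((\<lambda>i. \<bar>z$i\<bar>) ` {i. z$i \<noteq> 0})"
  have m_le: "\<And>i. z$i \<noteq> 0 \<Longrightarrow> m \<le> \<bar>z$i\<bar>"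
    unfolding m_def by (rule Min_le) auto
  have m_pos: "m > 0"
  proof -
    have "m \<in> (\<lambda>i. \<bar>z$i\<bar>) ` {i. z$i \<noteq> 0}"
      unfolding m_def using zne by (intro Min_in) auto
    then show ?thesis by auto
  qed
  have m_le1: "m \<le> 1"
  proof -
    obtain i where "z$i \<noteq> 0" using zne by blast
    then have "m \<le> \<bar>z$i\<bar>" by (rule m_le)
    also have "\<dots> \<le> norm z" by (rule component_le_norm_cart)
    finally show ?thesis using zn by simp
  qed
  define S where "S = {x. (\<forall>i. z$i \<noteq> 0 \<longrightarrow> x$i = 0) \<and> H *v x = 0}"
  have subS: "subspace S"
    unfolding subspace_def S_def by (simp add: matrix_vector_right_distrib matrix_vector_mult_scaleR)
  define T where "T = {x. (\<forall>i. z$i \<noteq> 0 \<longrightarrow> x$i = 0) \<and> (\<forall>w\<in>S. x \<bullet> w = 0)}"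
  have subT: "subspace T"
    unfolding subspace_def T_def by (simp add: inner_add_left)
  have injT: "\<forall>x\<in>T. H *v x = 0 \<longrightarrow> x = 0"
  proof (intro ballI impI)
    fix x assume xT: "x \<in> T" and "H *v x = 0"
    then have "x \<in> S" unfolding S_def T_def by auto
    then have "x \<bullet> x = 0" using xT unfolding T_def by auto
    then show "x = 0" by simp
  qed
  obtain c where c: "c > 0" "\<And>x. x \<in> T \<Longrightarrow> c * norm x \<le> norm (H *v x)"
    using injective_imp_isometric[OF closed_subspace[OF subT] subT matrix_vector_mul_bounded_linear[of H] injT]
    by blast
  define a1 where "a1 = 2*L/c^2"
  define a2 where "a2 = 2*L^2/(m^2*c^2)"
  define K0 where "K0 = 6/m^2 + 1"
  have a1_pos: "a1 > 0" unfolding a1_def using L c by simp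
  have a2_pos: "a2 > 0" unfolding a2_def using L c m_pos by simp
  have K0_pos: "K0 > 0" unfolding K0_def using m_pos by (simp add: add_pos_pos)
  define D where "D = 8 + 2*\<beta>*K0*a1 + 2*K0*(1+a2)"
  have D8: "D \<ge> 8" unfolding D_def using beta_pos K0_pos a1_pos a2_pos
    by (simp add: add_nonneg_nonneg)
  define \<delta> where "\<delta> = min (m/2) (1 / D)"
  define \<eta> where "\<eta> = 2 * (2 * real CARD('n) / \<beta>) powr (1/4)"
  have \<delta>_pos: "\<delta> > 0" unfolding \<delta>_def using m_pos D8 by simp
  have \<eta>_pos: "\<eta> > 0" unfolding \<eta>_def using beta_pos by simp
  have \<delta>_m: "\<delta> \<le> m/2" unfolding \<delta>_def by simp
  have dD: "\<delta> * D \<le> 1"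
  proof -
    have "\<delta> \<le> 1/D" unfolding \<delta>_def by simp
    then show ?thesis using D8 by (simp add: field_simps)
  qed
  have \<delta>_1: "\<delta> \<le> 1/8"
  proof -
    have "\<delta> * 8 \<le> \<delta> * D" using D8 \<delta>_pos by (intro mult_left_mono) auto
    then show ?thesis using dD by linarith
  qed
  have \<delta>_c1: "2*\<delta> + \<beta>*\<delta>*K0*a1 \<le> 1/2" and \<delta>_c2: "\<delta>*K0*(1+a2) \<le> 1/2"
  proof -
    have e: "\<delta> * D = 8*\<delta> + 2*(\<beta>*\<delta>*K0*a1) + 2*(\<delta>*K0*(1+a2))"
      unfolding D_def by (simp add: algebra_simps)
    have p1: "\<beta>*\<delta>*K0*a1 \<ge> 0" using beta_pos \<delta>_pos K0_pos a1_pos by simp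
    have p2: "\<delta>*K0*(1+a2) \<ge> 0" using \<delta>_pos K0_pos a2_pos by simp
    show "2*\<delta> + \<beta>*\<delta>*K0*a1 \<le> 1/2" "\<delta>*K0*(1+a2) \<le> 1/2"
      using e dD p1 p2 \<delta>_pos by linarith+
  qed
  have key: "\<bar>quartic_obj A \<beta> y - quartic_obj A \<beta> z\<bar> powr (3/4) \<le> \<eta> * norm (riem_grad A \<beta> y)"
    if ys: "y \<in> unit_sphere" and yd: "norm (y - z) < \<delta>" for y
  proof -
    have yn: "norm y = 1" using ys by (simp add: unit_sphere_def)
    have yy: "(\<Sum>i\<in>UNIV. (y$i)^2) = 1" using normsq_sum[of y] yn by simp
    define h where "h = y - z"
    have hy: "\<And>i. y$i = z$i + h$i" unfolding h_def by simp
    have hn: "norm h < \<delta>" using yd h_def by simp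
    have hi: "\<And>i. \<bar>h$i\<bar> < \<delta>" using component_le_norm_cart[of h] hn by (meson le_less_trans)
    have zi1: "\<And>i. \<bar>z$i\<bar> \<le> 1" using component_le_norm_cart[of z] zn by simp
    have yz: "0 \<le> y$i * z$i" for i
    proof (cases "z$i = 0")
      case True then show ?thesis by simp
    next
      case False
      have "\<bar>h$i\<bar> \<le> \<bar>z$i\<bar>" using hi[of i] \<delta>_m m_le[OF False] m_pos by linarith
      then have "\<bar>h$i\<bar> * \<bar>z$i\<bar> \<le> \<bar>z$i\<bar> * \<bar>z$i\<bar>" by (rule mult_right_mono) auto
      then have "\<bar>h$i * z$i\<bar> \<le> z$i * z$i" by (simp add: abs_mult abs_mult_self_eq)
      then show ?thesis unfolding hy by (simp add: algebra_simps abs_le_iff)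
    qed
    define u where "u = (\<chi> i. (y$i)^2 - (z$i)^2)"
    have uc: "\<And>i. u$i = h$i * (2*z$i + h$i)" unfolding u_def hy by (simp add: algebra_simps power2_eq_square)
    have u_h4: "(h$i)^4 \<le> (u$i)^2" for i
    proof -
      have "(u$i)^2 - (h$i)^4 = (h$i)^2 * (4 * (y$i * z$i))"
        unfolding uc hy by (simp add: algebra_simps power2_eq_square power4_eq_xxxx)
      moreover have "(h$i)^2 * (4 * (y$i * z$i)) \<ge> 0" using yz[of i] by simp
      ultimately show ?thesis by linarith
    qed
    have u_N: "m * \<bar>h$i\<bar> \<le> \<bar>u$i\<bar>" if zi: "z$i \<noteq> 0" for i
    proof -
      have "(z$i)^2 \<le> (y$i + z$i)^2" using yz[of i] by (simp add: power2_eq_square algebra_simps)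
      then have "\<bar>z$i\<bar> \<le> \<bar>y$i + z$i\<bar>" using abs_le_square_iff by blast
      then have "m \<le> \<bar>2*z$i + h$i\<bar>" using m_le[OF zi] hy[of i] by (simp add: algebra_simps)
      then have "m * \<bar>h$i\<bar> \<le> \<bar>2*z$i + h$i\<bar> * \<bar>h$i\<bar>" by (simp add: mult_right_mono)
      then show ?thesis by (simp add: uc abs_mult mult.commute)
    qed
    have u_3: "\<bar>u$i\<bar> \<le> 3 * \<bar>h$i\<bar>" for i
    proof -
      have t: "\<bar>2*z$i + h$i\<bar> \<le> \<bar>2*z$i\<bar> + \<bar>h$i\<bar>" by (rule abs_triangle_ineq)
      have "\<bar>2*z$i\<bar> \<le> 2" using zi1[of i] by simp
      then have "\<bar>2*z$i + h$i\<bar> \<le> 3" using t hi[of i] \<delta>_1 by linarith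
      then have "\<bar>h$i\<bar> * \<bar>2*z$i + h$i\<bar> \<le> \<bar>h$i\<bar> * 3" by (simp add: mult_left_mono)
      then show ?thesis by (simp add: uc abs_mult mult.commute)
    qed
    have usum: "(\<Sum>i\<in>UNIV. u$i) = 0" using yy zz by (simp add: u_def sum_subtractf)
    have nu_le: "norm u \<le> 3 * norm h"
    proof -
      have "norm u ^ 2 \<le> (3 * norm h)^2"
        unfolding normsq_sum power_mult_distrib sum_distrib_left
      proof (intro sum_mono)
        fix i
        have "\<bar>u$i\<bar> ^2 \<le> (3 * \<bar>h$i\<bar>)^2" using u_3[of i] by (intro power_mono) auto
        then show "(u$i)^2 \<le> 3^2 * (h$i)^2" by (simp add: power_mult_distrib)
      qed
      then show ?thesis by (rule power2_le_imp_le) simp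
    qed
    define hZ where "hZ = (\<chi> i. if z$i = 0 then h$i else 0)"
    define hN where "hN = (\<chi> i. if z$i = 0 then 0 else h$i)"
    have hNZ: "h = hN + hZ" unfolding hN_def hZ_def by (simp add: vec_eq_iff)
    have spS: "span S = S" using subS by (simp add: span_eq_iff)
    obtain k j where kS: "k \<in> S" and jS: "\<And>w. w \<in> S \<Longrightarrow> j \<bullet> w = 0" and hkj: "hZ = k + j"
      using orthogonal_subspace_decomp_exists[of S hZ] spS unfolding orthogonal_def by metis
    have kN: "\<And>i. z$i \<noteq> 0 \<Longrightarrow> k$i = 0" and Hk: "H *v k = 0" using kS unfolding S_def by auto
    have jc: "\<And>i. j$i = hZ$i - k$i" using hkj by simp
    have jN: "\<And>i. z$i \<noteq> 0 \<Longrightarrow> j$i = 0" using jc kN unfolding hZ_def by simp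
    have jT: "j \<in> T" unfolding T_def using jN jS by auto
    have kj: "k \<bullet> j = 0" using jS[OF kS] by (simp add: inner_commute)
    have nhZ: "norm hZ \<le> norm h"
    proof -
      have "norm hZ ^ 2 \<le> norm h ^ 2" unfolding normsq_sum
        by (intro sum_mono) (simp add: hZ_def)
      then show ?thesis by (rule power2_le_imp_le) simp
    qed
    have pyth: "norm hZ ^ 2 = norm k ^ 2 + norm j ^ 2"
      unfolding hkj by (simp add: power2_norm_eq_inner inner_add_left inner_add_right kj inner_commute[of j k])
    have nk: "norm k \<le> norm h"
    proof -
      have "norm k ^ 2 \<le> norm h ^ 2" using pyth nhZ
        by (smt (verit) norm_ge_zero power_mono zero_le_power2)
      then show ?thesis by (rule power2_le_imp_le) simp
    qed
    have nj: "norm j \<le> norm h"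
    proof -
      have "norm j ^ 2 \<le> norm h ^ 2" using pyth nhZ
        by (smt (verit) norm_ge_zero power_mono zero_le_power2)
      then show ?thesis by (rule power2_le_imp_le) simp
    qed
    define Q where "Q = h \<bullet> (H *v h)"
    have Q0: "Q \<ge> 0" unfolding Q_def by (rule psd)
    have nhN: "m^2 * norm hN ^ 2 \<le> norm u ^ 2"
      unfolding normsq_sum sum_distrib_left
    proof (intro sum_mono)
      fix i
      show "m^2 * (hN$i)^2 \<le> (u$i)^2"
      proof (cases "z$i = 0")
        case True then show ?thesis by (simp add: hN_def)
      next
        case False
        have "(m * \<bar>h$i\<bar>)^2 \<le> \<bar>u$i\<bar>^2" using u_N[OF False] m_pos by (intro power_mono) auto
        then show ?thesis using False by (simp add: hN_def power_mult_distrib)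
      qed
    qed
    have HjE: "H *v j = H *v h - H *v hN"
    proof -
      have "H *v h = H *v hN + H *v k + H *v j" unfolding hNZ hkj by (simp add: matrix_vector_right_distrib)
      then show ?thesis using Hk by simp
    qed
    have j_bound: "norm j ^ 2 \<le> a1 * Q + a2 * norm u ^ 2"
    proof -
      have "c * norm j \<le> norm (H *v j)" by (rule c(2)[OF jT])
      also have "\<dots> \<le> norm (H *v h) + norm (H *v hN)" unfolding HjE by (rule norm_triangle_ineq4)
      also have "\<dots> \<le> norm (H *v h) + L * norm hN" using L(2)[of hN] by simp
      finally have cj: "c * norm j \<le> norm (H *v h) + L * norm hN" .
      have "(c * norm j)^2 \<le> (norm (H *v h) + L * norm hN)^2"
        using cj c(1) by (intro power_mono) auto
      also have "\<dots> \<le> 2 * norm (H *v h)^2 + 2 * (L * norm hN)^2"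
        by (smt (verit) sum_squares_bound power2_sum)
      also have "\<dots> \<le> 2 * (L * Q) + 2 * (L^2 * (norm u^2 / m^2))"
      proof -
        have "norm (H *v h)^2 \<le> L * Q" unfolding Q_def by (rule HQ)
        moreover have "(L * norm hN)^2 \<le> L^2 * (norm u^2 / m^2)"
          using nhN m_pos L(1) by (simp add: power_mult_distrib field_simps mult_left_mono)
        ultimately show ?thesis by linarith
      qed
      finally have "c^2 * norm j^2 \<le> 2 * L * Q + 2 * L^2 * norm u^2 / m^2"
        by (simp add: power_mult_distrib algebra_simps)
      then have "norm j^2 \<le> (2 * L * Q + 2 * L^2 * norm u^2 / m^2) / c^2"
        using c(1) by (simp add: field_simps)
      also have "\<dots> = a1 * Q + a2 * norm u ^ 2"
        unfolding a1_def a2_def using c(1) m_pos by (simp add: field_simps)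
      finally show ?thesis .
    qed
    have AzE: "\<And>x. x \<bullet> (A *v z) = (\<Sum>i\<in>UNIV. x$i * (2*lam*z$i - 2*\<beta>*(z$i)^3))"
      by (simp add: inner_sum Azc)
    have Asym: "\<And>a b. a \<bullet> (A *v b) = (A *v a) \<bullet> b" using sym_mv[OF symA] .
    have hAh: "h \<bullet> (A *v h) = y \<bullet> (A *v y) - 2 * (y \<bullet> (A *v z)) + z \<bullet> (A *v z)"
    proof -
      have "z \<bullet> (A *v y) = y \<bullet> (A *v z)" using Asym[of z y] by (simp add: inner_commute)
      then show ?thesis unfolding h_def
        by (simp add: matrix_vector_mult_diff_distrib inner_diff_left inner_diff_right)
    qed
    have QE: "Q = h \<bullet> (A *v h) + (\<Sum>i\<in>UNIV. (2*\<beta>*(z$i)^2 - 2*lam) * (h$i)^2)"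
    proof -
      have "Q = (\<Sum>i\<in>UNIV. h$i * (A *v h)$i + (2*\<beta>*(z$i)^2 - 2*lam) * (h$i)^2)"
        unfolding Q_def inner_sum Hc by (intro sum.cong) (auto simp: algebra_simps power2_eq_square)
      also have "\<dots> = (\<Sum>i\<in>UNIV. h$i * (A *v h)$i) + (\<Sum>i\<in>UNIV. (2*\<beta>*(z$i)^2 - 2*lam) * (h$i)^2)"
        by (rule sum.distrib)
      finally show ?thesis by (simp add: inner_sum)
    qed
    define F where "F = quartic_obj A \<beta> y - quartic_obj A \<beta> z"
    have FE: "F = Q/2 + \<beta>/2 * norm u ^ 2"
    proof -
      have pc: "y$i * (2*lam*z$i - 2*\<beta>*(z$i)^3) - z$i * (2*lam*z$i - 2*\<beta>*(z$i)^3)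
          + \<beta>/2 * (y$i)^4 - \<beta>/2 * (z$i)^4 - 1/2 * ((2*\<beta>*(z$i)^2 - 2*lam) * (h$i)^2)
          - \<beta>/2 * (u$i)^2 = lam * ((y$i)^2 - (z$i)^2)" for i
        unfolding uc hy by (simp add: algebra_simps power2_eq_square power3_eq_cube power4_eq_xxxx)
      have "F - (Q/2 + \<beta>/2 * norm u ^ 2) =
          (\<Sum>i\<in>UNIV. y$i * (2*lam*z$i - 2*\<beta>*(z$i)^3)) - (\<Sum>i\<in>UNIV. z$i * (2*lam*z$i - 2*\<beta>*(z$i)^3))
          + \<beta>/2 * (\<Sum>i\<in>UNIV. (y$i)^4) - \<beta>/2 * (\<Sum>i\<in>UNIV. (z$i)^4)
          - 1/2 * (\<Sum>i\<in>UNIV. (2*\<beta>*(z$i)^2 - 2*lam) * (h$i)^2) - \<beta>/2 * (\<Sum>i\<in>UNIV. (u$i)^2)"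
        unfolding F_def quartic_obj_def QE hAh AzE[symmetric] normsq_sum by (simp add: field_simps)
      also have "\<dots> = (\<Sum>i\<in>UNIV. y$i * (2*lam*z$i - 2*\<beta>*(z$i)^3) - z$i * (2*lam*z$i - 2*\<beta>*(z$i)^3)
          + \<beta>/2 * (y$i)^4 - \<beta>/2 * (z$i)^4 - 1/2 * ((2*\<beta>*(z$i)^2 - 2*lam) * (h$i)^2)
          - \<beta>/2 * (u$i)^2)"
        by (simp add: sum.distrib sum_subtractf sum_distrib_left)
      also have "\<dots> = (\<Sum>i\<in>UNIV. lam * ((y$i)^2 - (z$i)^2))" using pc by simp
      also have "\<dots> = lam * ((\<Sum>i\<in>UNIV. (y$i)^2) - (\<Sum>i\<in>UNIV. (z$i)^2))"
        by (simp add: right_diff_distrib sum_subtractf sum_distrib_left)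
      also have "\<dots> = 0" using yy zz by simp
      finally show ?thesis by simp
    qed
    have Gc: "(A *v y + (2*\<beta>) *\<^sub>R (diag_sq y *v y))$i = (A *v y)$i + 2*\<beta>*(y$i)^3" for i
    proof -
      have "((0 + 1 *\<^sub>R diag_sq y - 0 *\<^sub>R mat 1) *v y)$i = (0 *v y)$i + (1*(y$i)^2 - 0) * y$i"
        by (rule H_comp)
      then have "(diag_sq y *v y)$i = (y$i)^2 * y$i" by simp
      then show ?thesis by (simp add: power2_eq_square power3_eq_cube)
    qed
    have Dc: "(diag_sq y *v y)$i = (y$i)^3" for i
    proof -
      have "((0 + 1 *\<^sub>R diag_sq y - 0 *\<^sub>R mat 1) *v y)$i = (0 *v y)$i + (1*(y$i)^2 - 0) * y$i"
        by (rule H_comp)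
      then show ?thesis by (simp add: power2_eq_square power3_eq_cube)
    qed
    define r where "r = H *v h + (2*\<beta>) *\<^sub>R (\<chi> i. y$i * u$i)"
    have rc: "(A *v y)$i + 2*\<beta>*(y$i)^3 = r$i + 2*lam*y$i" for i
    proof -
      have "(A *v h)$i = (A *v y)$i - (A *v z)$i" unfolding h_def by (simp add: matrix_vector_mult_diff_distrib)
      then show ?thesis unfolding r_def using Azc[of i]
        by (simp add: Hc u_def hy algebra_simps power2_eq_square power3_eq_cube)
    qed
    have yy1: "y \<bullet> y = 1" using yn by (simp add: power2_norm_eq_inner[symmetric])
    have GE: "A *v y + (2*\<beta>) *\<^sub>R (diag_sq y *v y) = r + (2*lam) *\<^sub>R y"
      by (simp add: vec_eq_iff Dc rc[symmetric])
    have gE: "riem_grad A \<beta> y = r - (y \<bullet> r) *\<^sub>R y"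
      unfolding riem_grad_def Let_def GE by (simp add: inner_add_right yy1 algebra_simps)
    define v where "v = h - (1/2) *\<^sub>R k"
    define sv where "sv = (\<Sum>i\<in>UNIV. (y$i)^2 * u$i)"
    have yzh: "y = z + h" unfolding h_def by simp
    have yHh: "y \<bullet> (H *v h) = Q"
    proof -
      have "y \<bullet> (H *v h) = (H *v y) \<bullet> h" by (rule Hs)
      also have "H *v y = H *v h" unfolding yzh by (simp add: matrix_vector_right_distrib Hz)
      finally show ?thesis unfolding Q_def by (simp add: inner_commute)
    qed
    have Hhk: "(H *v h) \<bullet> k = 0"
    proof -
      have "(H *v h) \<bullet> k = k \<bullet> (H *v h)" by (rule inner_commute)
      also have "\<dots> = (H *v k) \<bullet> h" by (rule Hs)
      finally show ?thesis using Hk by simp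
    qed
    have rv: "r \<bullet> v = Q + 2*\<beta>*(\<Sum>i\<in>UNIV. y$i * u$i * v$i)"
    proof -
      have "(H *v h) \<bullet> v = (H *v h) \<bullet> h - (1/2) * ((H *v h) \<bullet> k)"
        unfolding v_def by (simp add: inner_diff_right)
      also have "(H *v h) \<bullet> h = Q" unfolding Q_def by (rule inner_commute)
      finally have "(H *v h) \<bullet> v = Q" using Hhk by simp
      moreover have "(\<chi> i. y$i * u$i) \<bullet> v = (\<Sum>i\<in>UNIV. y$i * u$i * v$i)"
        by (simp add: inner_sum)
      ultimately show ?thesis unfolding r_def by (simp add: inner_add_left)
    qed
    have yr: "y \<bullet> r = Q + 2*\<beta>* sv"
    proof -
      have "y \<bullet> (\<chi> i. y$i * u$i) = sv" unfolding sv_def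
        by (simp add: inner_sum power2_eq_square algebra_simps)
      then show ?thesis unfolding r_def by (simp add: inner_add_right yHh)
    qed
    define X where "X = (\<Sum>i\<in>UNIV. 2 * y$i * v$i * (u$i - sv))"
    have yvs: "y \<bullet> v = (\<Sum>i\<in>UNIV. y$i * v$i)" by (rule inner_sum)
    have XE1: "X = 2 * (\<Sum>i\<in>UNIV. y$i * u$i * v$i) - 2 * sv * (y \<bullet> v)"
      unfolding X_def yvs by (simp add: sum_subtractf sum_distrib_left algebra_simps)
    have gv: "riem_grad A \<beta> y \<bullet> v = Q * (1 - y \<bullet> v) + \<beta> * X"
      unfolding gE XE1 by (simp add: inner_diff_left rv yr algebra_simps)
    define \<rho> where "\<rho> i = (if z$i \<noteq> 0 then (h$i)^2 * (u$i - sv) else (h$i)^3 * j$i)" for i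
    have Xc: "2 * y$i * v$i * (u$i - sv) = (u$i)^2 - sv * u$i + \<rho> i - sv * (hZ$i * j$i)" for i
    proof (cases "z$i = 0")
      case True
      have e1: "y$i = h$i" using hy[of i] True by simp
      have e2: "u$i = (h$i)^2" using uc[of i] True by (simp add: power2_eq_square)
      have e3: "k$i = h$i - j$i" using jc[of i] True by (simp add: hZ_def)
      have e4: "hZ$i = h$i" using True by (simp add: hZ_def)
      show ?thesis unfolding \<rho>_def v_def using True
        by (simp add: e1 e2 e3 e4 algebra_simps power2_eq_square power3_eq_cube)
    next
      case False
      have e3: "k$i = 0" using kN[OF False] .
      have e4: "hZ$i = 0" using False by (simp add: hZ_def)
      have e2: "u$i = h$i * (2*z$i + h$i)" by (rule uc)
      show ?thesis unfolding \<rho>_def v_def using False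
        by (simp add: e2 e3 e4 hy algebra_simps power2_eq_square)
    qed
    have XE: "X = norm u ^ 2 + (\<Sum>i\<in>UNIV. \<rho> i) - sv * (hZ \<bullet> j)"
    proof -
      have "X = (\<Sum>i\<in>UNIV. (u$i)^2 - sv * u$i + \<rho> i - sv * (hZ$i * j$i))"
        unfolding X_def using Xc by simp
      also have "\<dots> = (\<Sum>i\<in>UNIV. (u$i)^2) - sv * (\<Sum>i\<in>UNIV. u$i) + (\<Sum>i\<in>UNIV. \<rho> i) - sv * (hZ \<bullet> j)"
        by (simp add: sum.distrib sum_subtractf sum_distrib_left inner_sum)
      finally show ?thesis using usum normsq_sum[of u] by simp
    qed
    have s_le: "\<bar>sv\<bar> \<le> norm u"
    proof -
      have "\<bar>sv\<bar> \<le> (\<Sum>i\<in>UNIV. \<bar>(y$i)^2 * u$i\<bar>)" unfolding sv_def by (rule sum_abs)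
      also have "\<dots> \<le> (\<Sum>i\<in>UNIV. (y$i)^2 * norm u)"
        by (intro sum_mono) (simp add: abs_mult mult_left_mono component_le_norm_cart)
      also have "\<dots> = norm u" using yy by (simp add: sum_distrib_right[symmetric])
      finally show ?thesis .
    qed
    have s_d: "\<bar>sv\<bar> \<le> 3 * \<delta>" using s_le nu_le hn by linarith
    have \<rho>_b: "\<bar>\<rho> i\<bar> \<le> \<delta> * (6/m^2 + 1/2) * ((u$i)^2 + (j$i)^2)" for i
    proof (cases "z$i = 0")
      case True
      have e2: "\<bar>u$i\<bar> = (h$i)^2" using uc[of i] True by (simp add: power2_eq_square abs_mult)
      have "\<bar>\<rho> i\<bar> = \<bar>h$i\<bar> * (\<bar>u$i\<bar> * \<bar>j$i\<bar>)" unfolding \<rho>_def using True e2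
        by (simp add: abs_mult power2_eq_square power3_eq_cube)
      also have "\<dots> \<le> \<delta> * (\<bar>u$i\<bar> * \<bar>j$i\<bar>)" using hi[of i] by (intro mult_right_mono) auto
      also have "\<dots> \<le> \<delta> * (((u$i)^2 + (j$i)^2)/2)"
      proof -
        have "2 * \<bar>u$i\<bar> * \<bar>j$i\<bar> \<le> \<bar>u$i\<bar>^2 + \<bar>j$i\<bar>^2" by (rule sum_squares_bound)
        then have "\<bar>u$i\<bar> * \<bar>j$i\<bar> \<le> ((u$i)^2 + (j$i)^2)/2" by simp
        then show ?thesis using \<delta>_pos by (intro mult_left_mono) auto
      qed
      also have "\<dots> \<le> \<delta> * (6/m^2 + 1/2) * ((u$i)^2 + (j$i)^2)"
        using \<delta>_pos m_pos by (simp add: field_simps add_nonneg_nonneg)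
      finally show ?thesis .
    next
      case False
      have hu: "(h$i)^2 \<le> (u$i)^2 / m^2"
      proof -
        have "(m * \<bar>h$i\<bar>)^2 \<le> \<bar>u$i\<bar>^2" using u_N[OF False] m_pos by (intro power_mono) auto
        then show ?thesis using m_pos by (simp add: field_simps power_mult_distrib)
      qed
      have us: "\<bar>u$i - sv\<bar> \<le> 6 * \<delta>" using u_3[of i] hi[of i] s_d by linarith
      have "\<bar>\<rho> i\<bar> = (h$i)^2 * \<bar>u$i - sv\<bar>" unfolding \<rho>_def using False by (simp add: abs_mult)
      also have "\<dots> \<le> ((u$i)^2 / m^2) * (6 * \<delta>)" using hu us by (intro mult_mono) auto
      also have "\<dots> \<le> \<delta> * (6/m^2 + 1/2) * ((u$i)^2 + (j$i)^2)"
        using \<delta>_pos m_pos by (simp add: field_simps add_nonneg_nonneg)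
      finally show ?thesis .
    qed
    have sum\<rho>: "\<bar>\<Sum>i\<in>UNIV. \<rho> i\<bar> \<le> \<delta> * (6/m^2 + 1/2) * (norm u ^ 2 + norm j ^ 2)"
    proof -
      have "\<bar>\<Sum>i\<in>UNIV. \<rho> i\<bar> \<le> (\<Sum>i\<in>UNIV. \<bar>\<rho> i\<bar>)" by (rule sum_abs)
      also have "\<dots> \<le> (\<Sum>i\<in>UNIV. \<delta> * (6/m^2 + 1/2) * ((u$i)^2 + (j$i)^2))"
        by (intro sum_mono \<rho>_b)
      also have "\<dots> = \<delta> * (6/m^2 + 1/2) * (norm u ^ 2 + norm j ^ 2)"
        by (simp add: normsq_sum sum.distrib[symmetric] sum_distrib_left)
      finally show ?thesis .
    qed
    have shj: "\<bar>sv * (hZ \<bullet> j)\<bar> \<le> \<delta>/2 * (norm u ^ 2 + norm j ^ 2)"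
    proof -
      have "\<bar>hZ \<bullet> j\<bar> \<le> norm hZ * norm j" by (rule Cauchy_Schwarz_ineq2)
      also have "\<dots> \<le> \<delta> * norm j" using nhZ hn by (intro mult_right_mono) auto
      finally have hj: "\<bar>hZ \<bullet> j\<bar> \<le> \<delta> * norm j" .
      have "\<bar>sv * (hZ \<bullet> j)\<bar> \<le> norm u * (\<delta> * norm j)"
        unfolding abs_mult using s_le hj by (intro mult_mono) auto
      also have "\<dots> = \<delta> * (norm u * norm j)" by simp
      also have "\<dots> \<le> \<delta> * ((norm u ^ 2 + norm j ^ 2)/2)"
      proof -
        have "2 * norm u * norm j \<le> norm u ^ 2 + norm j ^ 2" by (rule sum_squares_bound)
        then show ?thesis using \<delta>_pos by (intro mult_left_mono) auto
      qed
      finally show ?thesis by simp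
    qed
    have Xlow: "X \<ge> norm u ^ 2 - \<delta> * K0 * (norm u ^ 2 + norm j ^ 2)"
      using XE sum\<rho> shj unfolding K0_def by (simp add: algebra_simps)
    have nv: "norm v \<le> 2 * norm h"
    proof -
      have "norm v \<le> norm h + norm ((1/2) *\<^sub>R k)" unfolding v_def by (rule norm_triangle_ineq4)
      then have "norm v \<le> norm h + norm k / 2" by simp
      then show ?thesis using nk norm_ge_zero[of h] by linarith
    qed
    have yv: "\<bar>y \<bullet> v\<bar> \<le> 2 * \<delta>"
    proof -
      have "\<bar>y \<bullet> v\<bar> \<le> norm y * norm v" by (rule Cauchy_Schwarz_ineq2)
      then show ?thesis using yn nv hn by simp
    qed
    have gvF: "riem_grad A \<beta> y \<bullet> v \<ge> F"
    proof -
      have t1: "Q * (1 - y \<bullet> v) \<ge> Q * (1 - 2*\<delta>)" using Q0 yv by (intro mult_left_mono) auto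
      have "X \<ge> norm u ^ 2 - \<delta> * K0 * (norm u ^ 2 + (a1 * Q + a2 * norm u ^ 2))"
      proof -
        have "\<delta> * K0 * (norm u ^ 2 + norm j ^ 2) \<le> \<delta> * K0 * (norm u ^ 2 + (a1 * Q + a2 * norm u ^ 2))"
          using j_bound \<delta>_pos K0_pos by (intro mult_left_mono) auto
        then show ?thesis using Xlow by linarith
      qed
      then have t2: "\<beta> * X \<ge> \<beta> * (norm u ^ 2 - \<delta> * K0 * (norm u ^ 2 + (a1 * Q + a2 * norm u ^ 2)))"
        using beta_pos by (intro mult_left_mono) auto
      have e: "Q * (1 - 2*\<delta>) + \<beta> * (norm u ^ 2 - \<delta> * K0 * (norm u ^ 2 + (a1 * Q + a2 * norm u ^ 2)))
          = Q * (1 - (2*\<delta> + \<beta>*\<delta>*K0*a1)) + (\<beta> * norm u ^ 2) * (1 - \<delta>*K0*(1+a2))"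
        by (simp add: algebra_simps)
      have t3: "Q * (1 - (2*\<delta> + \<beta>*\<delta>*K0*a1)) \<ge> Q * (1/2)" using Q0 \<delta>_c1 by (intro mult_left_mono) auto
      have t4: "(\<beta> * norm u ^ 2) * (1 - \<delta>*K0*(1+a2)) \<ge> (\<beta> * norm u ^ 2) * (1/2)"
        using beta_pos \<delta>_c2 by (intro mult_left_mono) auto
      show ?thesis using gv t1 t2 e t3 t4 FE by linarith
    qed
    have Fg: "F \<le> 2 * norm h * norm (riem_grad A \<beta> y)"
    proof -
      have "F \<le> norm (riem_grad A \<beta> y) * norm v" using gvF norm_cauchy_schwarz[of "riem_grad A \<beta> y" v] by linarith
      also have "\<dots> \<le> norm (riem_grad A \<beta> y) * (2 * norm h)" using nv by (intro mult_left_mono) auto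
      finally show ?thesis by (simp add: algebra_simps)
    qed
    have F0: "F \<ge> 0" using FE Q0 beta_pos by simp
    define B where "B = 2 * real CARD('n) / \<beta>"
    have B0: "B \<ge> 0" unfolding B_def using beta_pos by simp
    have h4: "norm h ^ 4 \<le> B * F"
    proof -
      have "norm h ^ 4 = (\<Sum>i\<in>UNIV. (h$i)^2)^2" by (simp add: normsq_sum[symmetric] power_mult[symmetric])
      also have "\<dots> \<le> (\<Sum>i\<in>UNIV. ((h$i)^2)^2) * real CARD('n)" by (rule sum_squared_le_sum_of_squares)
      also have "\<dots> \<le> (\<Sum>i\<in>UNIV. (u$i)^2) * real CARD('n)"
        by (intro mult_right_mono sum_mono) (auto simp: u_h4 power_mult[symmetric])
      also have "\<dots> = real CARD('n) * norm u ^ 2" by (simp add: normsq_sum)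
      also have "\<dots> \<le> B * F" unfolding B_def FE using beta_pos Q0 by (simp add: field_simps)
      finally show ?thesis .
    qed
    have "\<bar>F\<bar> powr (3/4) \<le> \<eta> * norm (riem_grad A \<beta> y)"
    proof (cases "F = 0")
      case True then show ?thesis using \<eta>_pos by simp
    next
      case False
      then have Fp: "F > 0" using F0 by simp
      have "norm h \<le> (B * F) powr (1/4)" by (rule le_powr_quarter) (use h4 in auto)
      also have "\<dots> = B powr (1/4) * F powr (1/4)" using B0 F0 by (simp add: powr_mult)
      finally have nh: "norm h \<le> B powr (1/4) * F powr (1/4)" .
      have "F powr (3/4) * F powr (1/4) = F" using Fp by (simp add: powr_add[symmetric])
      also have "\<dots> \<le> 2 * norm h * norm (riem_grad A \<beta> y)" by (rule Fg)
      also have "\<dots> \<le> 2 * (B powr (1/4) * F powr (1/4)) * norm (riem_grad A \<beta> y)"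
        using nh by (intro mult_right_mono) auto
      also have "\<dots> = (\<eta> * norm (riem_grad A \<beta> y)) * F powr (1/4)"
        unfolding \<eta>_def B_def by (simp add: algebra_simps)
      finally have "F powr (3/4) * F powr (1/4) \<le> (\<eta> * norm (riem_grad A \<beta> y)) * F powr (1/4)" .
      then have "F powr (3/4) \<le> \<eta> * norm (riem_grad A \<beta> y)" using Fp by simp
      then show ?thesis using F0 by simp
    qed
    then show ?thesis unfolding F_def .
  qed
  show ?thesis using \<delta>_pos \<eta>_pos key by blast
qed

end
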